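(* Let $\Gamma$ be a distance-regular graph with classical parameters $(D,b,\alpha,\beta)$ such that $b\ge2$ and $D\ge3$. Assume $\Gamma$ has the PLS$(\gamma)$ property for some $\gamma\ge3$, and that $\Gamma$ contains two distinct Delsarte vertices at distance at most two. Then $\alpha\le b$ and $\alpha$ is a non-negative integer.
   Context: Distance-regular graph with intersection numbers $b_i,c_i$, valency $k=b_0$. For integer $b\ne1$, $[j]=\frac{b^j-1}{b-1}$. Classical parameters $(D,b,\alpha,\beta)$: diameter $D$, $b_i=([D]-[i])(\beta-\alpha[i])$, $c_i=[i](1+\alpha[i-1])$. Partial linear space: points and lines, any two distinct points on at most one common line; point graph: points adjacent iff on a common line. $\Gamma$ has the PLS$(\gamma)$ property if $\Gamma$ is the point graph of a partial linear space $(V(\Gamma),\mathcal L,\in)$ where $\mathcal L$ is the set of maximal cliques of $\Gamma$ with at least $\gamma$ vertices. A Delsarte clique is a clique with $1+\frac{k}{-\theta_{\min}}$ vertices, $\theta_{\min}$ the smallest adjacency eigenvalue. A Delsarte vertex is a vertex all of whose lines in $\mathcal L$ are Delsarte cliques. *)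

theory Defs
  imports Complex_Main
begin

fun walk :: "('a \<Rightarrow> 'a \<Rightarrow> bool) \<Rightarrow> 'a list \<Rightarrow> bool" where
  "walk E [] = False"
| "walk E [x] = True"
| "walk E (x # y # xs) = (E x y \<and> walk E (y # xs))"

definition simple_graph :: "'a set \<Rightarrow> ('a \<Rightarrow> 'a \<Rightarrow> bool) \<Rightarrow> bool" where
  "simple_graph V E \<longleftrightarrow> finite V \<and> V \<noteq> {} \<and>
     (\<forall>x y. E x y \<longrightarrow> x \<in> V \<and> y \<in> V) \<and>
     (\<forall>x y. E x y \<longrightarrow> E y x) \<and> (\<forall>x. \<not> E x x)"

definition connected_graph :: "'a set \<Rightarrow> ('a \<Rightarrow> 'a \<Rightarrow> bool) \<Rightarrow> bool" where
  "connected_graph V E \<longleftrightarrow>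
     (\<forall>x\<in>V. \<forall>y\<in>V. \<exists>p. walk E p \<and> hd p = x \<and> last p = y)"

definition gdist :: "('a \<Rightarrow> 'a \<Rightarrow> bool) \<Rightarrow> 'a \<Rightarrow> 'a \<Rightarrow> nat" where
  "gdist E x y = (LEAST n. \<exists>p. walk E p \<and> hd p = x \<and> last p = y \<and> length p = Suc n)"

definition distance_regular ::
  "'a set \<Rightarrow> ('a \<Rightarrow> 'a \<Rightarrow> bool) \<Rightarrow> nat \<Rightarrow> (nat \<Rightarrow> nat) \<Rightarrow> (nat \<Rightarrow> nat) \<Rightarrow> bool" where
  "distance_regular V E D bi ci \<longleftrightarrow>
     simple_graph V E \<and> connected_graph V E \<and>
     (\<forall>x\<in>V. \<forall>y\<in>V. gdist E x y \<le> D) \<and>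
     (\<exists>x\<in>V. \<exists>y\<in>V. gdist E x y = D) \<and>
     (\<forall>x\<in>V. \<forall>y\<in>V. gdist E x y < D \<longrightarrow>
        card {z\<in>V. E y z \<and> gdist E x z = gdist E x y + 1} = bi (gdist E x y)) \<and>
     (\<forall>x\<in>V. \<forall>y\<in>V. 1 \<le> gdist E x y \<longrightarrow>
        card {z\<in>V. E y z \<and> gdist E x z + 1 = gdist E x y} = ci (gdist E x y))"

(* Gaussian integer [j] = (b^j - 1)/(b - 1) *)
definition qint :: "int \<Rightarrow> nat \<Rightarrow> real" where
  "qint b j = (real_of_int b ^ j - 1) / (real_of_int b - 1)"

definition classical_parameters ::
  "(nat \<Rightarrow> nat) \<Rightarrow> (nat \<Rightarrow> nat) \<Rightarrow> nat \<Rightarrow> int \<Rightarrow> real \<Rightarrow> real \<Rightarrow> bool" where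
  "classical_parameters bi ci D b \<alpha> \<beta> \<longleftrightarrow> b \<noteq> 1 \<and>
     (\<forall>i<D. real (bi i) = (qint b D - qint b i) * (\<beta> - \<alpha> * qint b i)) \<and>
     (\<forall>i. 1 \<le> i \<and> i \<le> D \<longrightarrow> real (ci i) = qint b i * (1 + \<alpha> * qint b (i - 1)))"

definition is_clique :: "'a set \<Rightarrow> ('a \<Rightarrow> 'a \<Rightarrow> bool) \<Rightarrow> 'a set \<Rightarrow> bool" where
  "is_clique V E C \<longleftrightarrow> C \<subseteq> V \<and> (\<forall>x\<in>C. \<forall>y\<in>C. x \<noteq> y \<longrightarrow> E x y)"

definition maximal_clique :: "'a set \<Rightarrow> ('a \<Rightarrow> 'a \<Rightarrow> bool) \<Rightarrow> 'a set \<Rightarrow> bool" where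
  "maximal_clique V E C \<longleftrightarrow> is_clique V E C \<and> (\<forall>C'. is_clique V E C' \<and> C \<subseteq> C' \<longrightarrow> C' = C)"

definition lines :: "'a set \<Rightarrow> ('a \<Rightarrow> 'a \<Rightarrow> bool) \<Rightarrow> nat \<Rightarrow> 'a set set" where
  "lines V E \<gamma> = {C. maximal_clique V E C \<and> card C \<ge> \<gamma>}"

definition partial_linear_space :: "'a set \<Rightarrow> 'a set set \<Rightarrow> bool" where
  "partial_linear_space P L \<longleftrightarrow> (\<forall>C\<in>L. C \<subseteq> P) \<and>
     (\<forall>x\<in>P. \<forall>y\<in>P. x \<noteq> y \<longrightarrow>
        (\<forall>C1\<in>L. \<forall>C2\<in>L. x \<in> C1 \<and> y \<in> C1 \<and> x \<in> C2 \<and> y \<in> C2 \<longrightarrow> C1 = C2))"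

definition is_point_graph :: "'a set \<Rightarrow> ('a \<Rightarrow> 'a \<Rightarrow> bool) \<Rightarrow> 'a set set \<Rightarrow> bool" where
  "is_point_graph V E L \<longleftrightarrow>
     (\<forall>x\<in>V. \<forall>y\<in>V. x \<noteq> y \<longrightarrow> (E x y \<longleftrightarrow> (\<exists>C\<in>L. x \<in> C \<and> y \<in> C)))"

definition PLS :: "'a set \<Rightarrow> ('a \<Rightarrow> 'a \<Rightarrow> bool) \<Rightarrow> nat \<Rightarrow> bool" where
  "PLS V E \<gamma> \<longleftrightarrow> partial_linear_space V (lines V E \<gamma>) \<and> is_point_graph V E (lines V E \<gamma>)"

(* eigenvalues of the adjacency matrix, vectors indexed by V *)
definition adj_eigenvalue :: "'a set \<Rightarrow> ('a \<Rightarrow> 'a \<Rightarrow> bool) \<Rightarrow> real \<Rightarrow> bool" where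
  "adj_eigenvalue V E \<theta> \<longleftrightarrow> (\<exists>f :: 'a \<Rightarrow> real. (\<exists>v\<in>V. f v \<noteq> 0) \<and>
     (\<forall>v\<in>V. (\<Sum>w\<in>{w\<in>V. E v w}. f w) = \<theta> * f v))"

definition theta_min :: "'a set \<Rightarrow> ('a \<Rightarrow> 'a \<Rightarrow> bool) \<Rightarrow> real" where
  "theta_min V E = Min {\<theta>. adj_eigenvalue V E \<theta>}"

definition delsarte_clique ::
  "'a set \<Rightarrow> ('a \<Rightarrow> 'a \<Rightarrow> bool) \<Rightarrow> nat \<Rightarrow> 'a set \<Rightarrow> bool" where
  "delsarte_clique V E k C \<longleftrightarrow> is_clique V E C \<and>
     real (card C) = 1 + real k / (- theta_min V E)"

definition delsarte_vertex ::
  "'a set \<Rightarrow> ('a \<Rightarrow> 'a \<Rightarrow> bool) \<Rightarrow> nat \<Rightarrow> nat \<Rightarrow> 'a \<Rightarrow> bool" where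
  "delsarte_vertex V E k \<gamma> x \<longleftrightarrow> x \<in> V \<and>
     (\<forall>C\<in>lines V E \<gamma>. x \<in> C \<longrightarrow> delsarte_clique V E k C)"

end

theory Submission imports Defs "HOL-Computational_Algebra.Polynomial" begin


lemma walk_Cons_iff: "walk E (x # p) \<longleftrightarrow> (p = [] \<or> (E x (hd p) \<and> walk E p))"
  by (cases p) auto

lemma walk_snoc: "p \<noteq> [] \<Longrightarrow> walk E (p @ [z]) \<longleftrightarrow> walk E p \<and> E (last p) z"
proof (induction p)
  case Nil then show ?case by simp
next
  case (Cons a p)
  show ?case
  proof (cases p)
    case Nil then show ?thesis by simp
  next
    case (Cons b q)
    then show ?thesis using Cons.IH by (auto simp: walk_Cons_iff)
  qed
qed

lemma walk_rev: assumes "\<And>x y. E x y \<Longrightarrow> E y x" shows "walk E p \<Longrightarrow> walk E (rev p)"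
proof (induction p)
  case (Cons x p)
  show ?case
  proof (cases p)
    case Nil then show ?thesis by simp
  next
    case (Cons y q)
    with Cons.prems Cons.IH have "walk E (rev p)" "E x y" by auto
    then show ?thesis using walk_snoc[of "rev p" E x] assms \<open>p = y # q\<close> by simp
  qed
qed simp

lemma walk_butlast: "walk E (p @ [z]) \<Longrightarrow> p \<noteq> [] \<Longrightarrow> walk E p"
  by (simp add: walk_snoc)

locale drg =
  fixes V :: "'a set" and E :: "'a \<Rightarrow> 'a \<Rightarrow> bool" and D :: nat and bi ci :: "nat \<Rightarrow> nat"
  assumes drg: "distance_regular V E D bi ci" and D2: "D \<ge> 2"
begin

abbreviation "d \<equiv> gdist E"

lemma fin: "finite V" and sym: "E x y \<Longrightarrow> E y x" and irr: "\<not> E x x"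
  and inV: "E x y \<Longrightarrow> x \<in> V" "E x y \<Longrightarrow> y \<in> V"
  using drg unfolding distance_regular_def simple_graph_def by blast+

lemma conn: "x \<in> V \<Longrightarrow> y \<in> V \<Longrightarrow> \<exists>p. walk E p \<and> hd p = x \<and> last p = y"
  using drg unfolding distance_regular_def connected_graph_def by blast

lemma d_bound: "x \<in> V \<Longrightarrow> y \<in> V \<Longrightarrow> d x y \<le> D"
  using drg unfolding distance_regular_def by blast

lemma gdist_wit: assumes "x \<in> V" "y \<in> V"
  shows "\<exists>p. walk E p \<and> hd p = x \<and> last p = y \<and> length p = Suc (d x y)"
proof -
  obtain p where p: "walk E p" "hd p = x" "last p = y" using conn assms by blast
  then have "p \<noteq> []" by auto
  then have "length p = Suc (length p - 1)" by simp
  with p have ex: "\<exists>n p. walk E p \<and> hd p = x \<and> last p = y \<and> length p = Suc n" by blast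
  show ?thesis unfolding gdist_def by (rule LeastI_ex[OF ex])
qed

lemma gdist_le: "walk E p \<Longrightarrow> hd p = x \<Longrightarrow> last p = y \<Longrightarrow> length p = Suc n \<Longrightarrow> d x y \<le> n"
  unfolding gdist_def by (rule Least_le) blast

lemma d_refl: "d x x = 0"
  using gdist_le[of "[x]" x x 0] by simp

lemma d_zero: assumes "x \<in> V" "y \<in> V" "d x y = 0" shows "x = y"
proof -
  obtain p where p: "walk E p" "hd p = x" "last p = y" "length p = Suc 0"
    using gdist_wit[OF assms(1,2)] assms(3) by auto
  then obtain a where "p = [a]" by (cases p) auto
  with p show ?thesis by simp
qed

lemma d_adj: assumes "E x y" shows "d x y = 1"
proof -
  have "d x y \<le> 1" using gdist_le[of "[x,y]" x y 1] assms by simp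
  moreover have "d x y \<noteq> 0" using d_zero[of x y] inV[OF assms] irr assms by auto
  ultimately show ?thesis by simp
qed

lemma d_one: assumes "x \<in> V" "y \<in> V" "d x y = 1" shows "E x y"
proof -
  obtain p where p: "walk E p" "hd p = x" "last p = y" "length p = Suc 1"
    using gdist_wit[OF assms(1,2)] assms(3) by auto
  then obtain a b where "p = [a,b]"
    by (cases p; cases "tl p") auto
  with p show ?thesis by simp
qed

lemma adj_iff: "x \<in> V \<Longrightarrow> y \<in> V \<Longrightarrow> E x y \<longleftrightarrow> d x y = 1"
  using d_adj d_one by blast

lemma d_step: assumes "x \<in> V" "E v w" shows "d x w \<le> d x v + 1"
proof -
  obtain p where p: "walk E p" "hd p = x" "last p = v" "length p = Suc (d x v)"
    using gdist_wit[OF assms(1) inV(1)[OF assms(2)]] by auto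
  then have ne: "p \<noteq> []" by auto
  have "walk E (p @ [w])" using walk_snoc[OF ne] p assms by simp
  moreover have "hd (p @ [w]) = x" using p ne by simp
  ultimately show ?thesis using gdist_le[of "p @ [w]" x w "Suc (d x v)"] p by simp
qed

lemma d_sym_le: assumes "x \<in> V" "y \<in> V" shows "d y x \<le> d x y"
proof -
  obtain p where p: "walk E p" "hd p = x" "last p = y" "length p = Suc (d x y)"
    using gdist_wit[OF assms] by auto
  then have ne: "p \<noteq> []" by auto
  have "walk E (rev p)" using walk_rev[of E p] sym p by blast
  moreover have "hd (rev p) = y" "last (rev p) = x" using p ne by (auto simp: hd_rev last_rev)
  ultimately show ?thesis using gdist_le[of "rev p" y x] p by simp
qed

lemma d_sym: "x \<in> V \<Longrightarrow> y \<in> V \<Longrightarrow> d x y = d y x"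
  using d_sym_le by (meson antisym)

lemma d_pred: assumes "x \<in> V" "y \<in> V" "d x y = Suc n" shows "\<exists>w. E w y \<and> d x w = n"
proof -
  obtain p where p: "walk E p" "hd p = x" "last p = y" "length p = Suc (Suc n)"
    using gdist_wit[OF assms(1,2)] assms(3) by auto
  define q where "q = butlast p"
  have pq: "p = q @ [y]" using p q_def by (metis append_butlast_last_id list.size(3) nat.simps(3))
  have qne: "q \<noteq> []" using p pq by auto
  have wq: "walk E q" and Ey: "E (last q) y" using p pq walk_snoc[OF qne] by auto
  have "hd q = x" using p pq qne by simp
  moreover have "length q = Suc n" using p pq by simp
  ultimately have le: "d x (last q) \<le> n" using gdist_le wq by blast
  have "d x y \<le> d x (last q) + 1" using d_step assms(1) Ey by blast
  with le assms(3) have "d x (last q) = n" by simp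
  with Ey show ?thesis by blast
qed

definition k :: real where "k = real (bi 0)"
definition bb :: "nat \<Rightarrow> real" where "bb j = (if j < D then real (bi j) else 0)"
definition cc :: "nat \<Rightarrow> real" where "cc j = (if j = 0 then 0 else real (ci j))"
definition aa :: "nat \<Rightarrow> real" where "aa j = k - bb j - cc j"
definition Nb :: "'a \<Rightarrow> 'a set" where "Nb v = {w\<in>V. E v w}"
definition Pr :: "nat \<Rightarrow> nat \<Rightarrow> real" where
  "Pr j i = (if i = Suc j then bb j else 0) + (if Suc i = j then cc j else 0) + (if i = j then aa j else 0)"

lemma bi_def: "x \<in> V \<Longrightarrow> y \<in> V \<Longrightarrow> d x y < D \<Longrightarrow>
   card {z\<in>V. E y z \<and> d x z = d x y + 1} = bi (d x y)"
  using drg unfolding distance_regular_def by blast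

lemma ci_def: "x \<in> V \<Longrightarrow> y \<in> V \<Longrightarrow> 1 \<le> d x y \<Longrightarrow>
   card {z\<in>V. E y z \<and> d x z + 1 = d x y} = ci (d x y)"
  using drg unfolding distance_regular_def by blast

lemma deg: assumes "v \<in> V" shows "card (Nb v) = bi 0"
proof -
  have "card {z\<in>V. E v z \<and> d v z = d v v + 1} = bi (d v v)"
    using bi_def[OF assms assms] D2 d_refl by simp
  moreover have "{z\<in>V. E v z \<and> d v z = d v v + 1} = Nb v"
    unfolding Nb_def using d_adj d_refl by auto
  ultimately show ?thesis using d_refl by simp
qed

lemma cnt: assumes x: "x \<in> V" and v: "v \<in> V"
  shows "real (card {w\<in>V. E v w \<and> d x w = i}) = Pr (d x v) i"
proof -
  define j where "j = d x v"
  define Up where "Up = {w\<in>V. E v w \<and> d x w = Suc j}"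
  define Dn where "Dn = {w\<in>V. E v w \<and> d x w + 1 = j}"
  define Mid where "Mid = {w\<in>V. E v w \<and> d x w = j}"
  have fin': "finite Up" "finite Dn" "finite Mid" unfolding Up_def Dn_def Mid_def using fin by auto
  have cUp: "real (card Up) = bb j"
  proof (cases "j < D")
    case True
    then show ?thesis using bi_def[OF x v] unfolding Up_def bb_def j_def by simp
  next
    case False
    then have "Up = {}" unfolding Up_def using d_bound[OF x] j_def by fastforce
    then show ?thesis using False unfolding bb_def by simp
  qed
  have cDn: "real (card Dn) = cc j"
  proof (cases "j = 0")
    case True
    then have "Dn = {}" unfolding Dn_def by auto
    then show ?thesis using True unfolding cc_def by simp
  next
    case False
    then show ?thesis using ci_def[OF x v] unfolding Dn_def cc_def j_def by simp
  qed
  have part: "Nb v = Up \<union> Mid \<union> Dn"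
  proof
    show "Nb v \<subseteq> Up \<union> Mid \<union> Dn"
    proof
      fix w assume "w \<in> Nb v"
      then have w: "w \<in> V" "E v w" unfolding Nb_def by auto
      have "d x w \<le> j + 1" using d_step[OF x w(2)] j_def by simp
      moreover have "j \<le> d x w + 1" using d_step[OF x sym[OF w(2)]] j_def by simp
      ultimately show "w \<in> Up \<union> Mid \<union> Dn" using w unfolding Up_def Mid_def Dn_def by auto
    qed
  qed (auto simp: Nb_def Up_def Mid_def Dn_def)
  have "card (Nb v) = card Up + card Mid + card Dn"
    unfolding part using fin' by (subst card_Un_disjoint; auto simp: Up_def Mid_def Dn_def)+
  then have cMid: "real (card Mid) = aa j"
    using deg[OF v] cUp cDn unfolding aa_def k_def by simp
  consider "i = Suc j" | "Suc i = j" | "i = j" | "i \<noteq> Suc j \<and> Suc i \<noteq> j \<and> i \<noteq> j" by blast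
  then show ?thesis
  proof cases
    case 1 then show ?thesis using cUp unfolding Up_def Pr_def j_def by simp
  next
    case 2
    then have "{w\<in>V. E v w \<and> d x w = i} = Dn" unfolding Dn_def by auto
    then show ?thesis using cDn 2 unfolding Pr_def j_def by simp
  next
    case 3 then show ?thesis using cMid unfolding Mid_def Pr_def j_def by simp
  next
    case 4
    have "{w\<in>V. E v w \<and> d x w = i} = {}"
    proof -
      { fix w assume w: "w \<in> V" "E v w" "d x w = i"
        have "d x w \<le> j + 1" using d_step[OF x w(2)] j_def by simp
        moreover have "j \<le> d x w + 1" using d_step[OF x sym[OF w(2)]] j_def by simp
        ultimately have False using 4 w(3) by linarith }
      then show ?thesis by blast
    qed
    then show ?thesis using 4 unfolding Pr_def j_def by (simp only:) simp
  qed
qed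

definition eig :: "real \<Rightarrow> ('a \<Rightarrow> real) \<Rightarrow> bool" where
  "eig \<theta> g \<longleftrightarrow> (\<forall>v\<in>V. (\<Sum>w\<in>{w\<in>V. E v w}. g w) = \<theta> * g v)"
definition Sp :: "'a \<Rightarrow> nat \<Rightarrow> 'a set" where "Sp x i = {v\<in>V. d x v = i}"
definition G :: "('a \<Rightarrow> real) \<Rightarrow> 'a \<Rightarrow> nat \<Rightarrow> real" where "G g x i = (\<Sum>v\<in>Sp x i. g v)"

lemma group_d: fixes F :: "nat \<Rightarrow> real" and g :: "'a \<Rightarrow> real" assumes x: "x \<in> V" and A: "A \<subseteq> V"
  shows "(\<Sum>z\<in>A. F (d x z) * g z) = (\<Sum>i\<le>D. F i * (\<Sum>z\<in>{z\<in>A. d x z = i}. g z))"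
proof -
  have fA: "finite A" using A fin finite_subset by blast
  have "(\<Sum>z\<in>A. F (d x z) * g z) = (\<Sum>i\<le>D. \<Sum>z\<in>{z\<in>A. d x z = i}. F (d x z) * g z)"
    by (rule sum.group[symmetric]) (use fA d_bound x A in auto)
  also have "\<dots> = (\<Sum>i\<le>D. F i * (\<Sum>z\<in>{z\<in>A. d x z = i}. g z))"
  proof (rule sum.cong)
    fix i
    have "F i * (\<Sum>z\<in>{z\<in>A. d x z = i}. g z) = (\<Sum>z\<in>{z\<in>A. d x z = i}. F i * g z)"
      by (simp add: sum_distrib_left)
    also have "\<dots> = (\<Sum>z\<in>{z\<in>A. d x z = i}. F (d x z) * g z)"
      by (rule sum.cong) auto
    finally show "(\<Sum>z\<in>{z\<in>A. d x z = i}. F (d x z) * g z) = F i * (\<Sum>z\<in>{z\<in>A. d x z = i}. g z)" by simp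
  qed simp
  finally show ?thesis .
qed

lemma Pr_fwd: assumes "j \<le> D"
  shows "(\<Sum>i\<le>D. u i * Pr j i) = cc j * u (j-1) + aa j * u j + bb j * u (Suc j)"
proof -
  have "(\<Sum>i\<le>D. u i * Pr j i) = (\<Sum>i\<le>D. (if i = Suc j then bb j * u i else 0))
      + (\<Sum>i\<le>D. (if Suc i = j then cc j * u i else 0)) + (\<Sum>i\<le>D. (if i = j then aa j * u i else 0))"
    unfolding sum.distrib[symmetric] by (rule sum.cong) (auto simp: Pr_def algebra_simps)
  also have "(\<Sum>i\<le>D. (if i = Suc j then bb j * u i else 0)) = bb j * u (Suc j)"
    using assms by (auto simp: bb_def)
  also have "(\<Sum>i\<le>D. (if Suc i = j then cc j * u i else 0)) = cc j * u (j-1)"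
  proof (cases j)
    case 0 then show ?thesis by (simp add: cc_def)
  next
    case (Suc j')
    then have "(\<Sum>i\<le>D. (if Suc i = j then cc j * u i else 0)) = (\<Sum>i\<le>D. (if i = j' then cc j * u i else 0))"
      by simp
    also have "\<dots> = cc j * u j'" using assms Suc by simp
    finally show ?thesis using Suc by simp
  qed
  also have "(\<Sum>i\<le>D. (if i = j then aa j * u i else 0)) = aa j * u j" using assms by simp
  finally show ?thesis by simp
qed

lemma Pr_bwd: assumes "i \<le> D"
  shows "(\<Sum>j\<le>D. Pr j i * H j) = (if i = 0 then 0 else bb (i-1) * H (i-1)) + aa i * H i
          + (if i < D then cc (Suc i) * H (Suc i) else 0)"
proof -
  have "(\<Sum>j\<le>D. Pr j i * H j) = (\<Sum>j\<le>D. (if i = Suc j then bb j * H j else 0))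
      + (\<Sum>j\<le>D. (if Suc i = j then cc j * H j else 0)) + (\<Sum>j\<le>D. (if i = j then aa j * H j else 0))"
    unfolding sum.distrib[symmetric] by (rule sum.cong) (auto simp: Pr_def algebra_simps)
  also have "(\<Sum>j\<le>D. (if i = Suc j then bb j * H j else 0)) = (if i = 0 then 0 else bb (i-1) * H (i-1))"
  proof (cases i)
    case 0 then show ?thesis by simp
  next
    case (Suc i')
    then have "(\<Sum>j\<le>D. (if i = Suc j then bb j * H j else 0)) = (\<Sum>j\<le>D. (if i' = j then bb j * H j else 0))"
      by simp
    also have "\<dots> = bb i' * H i'" using assms Suc by simp
    finally show ?thesis using Suc by simp
  qed
  also have "(\<Sum>j\<le>D. (if Suc i = j then cc j * H j else 0)) = (if i < D then cc (Suc i) * H (Suc i) else 0)"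
    using assms by simp
  also have "(\<Sum>j\<le>D. (if i = j then aa j * H j else 0)) = aa i * H i" using assms by simp
  finally show ?thesis by simp
qed

lemma fwd: assumes rec: "\<And>j. j \<le> D \<Longrightarrow> cc j * u (j-1) + aa j * u j + bb j * u (Suc j) = \<theta> * u j"
  and c: "c \<in> V"
  shows "eig \<theta> (\<lambda>v. u (d c v))"
  unfolding eig_def
proof
  fix v assume v: "v \<in> V"
  have "(\<Sum>w\<in>{w\<in>V. E v w}. u (d c w)) = (\<Sum>w\<in>{w\<in>V. E v w}. u (d c w) * 1)" by simp
  also have "\<dots> = (\<Sum>i\<le>D. u i * (\<Sum>z\<in>{z\<in>{w\<in>V. E v w}. d c z = i}. 1))"
    by (rule group_d[OF c]) auto
  also have "\<dots> = (\<Sum>i\<le>D. u i * Pr (d c v) i)"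
  proof (rule sum.cong)
    fix i
    have "{z\<in>{w\<in>V. E v w}. d c z = i} = {w\<in>V. E v w \<and> d c w = i}" by auto
    then show "u i * (\<Sum>z\<in>{z\<in>{w\<in>V. E v w}. d c z = i}. 1) = u i * Pr (d c v) i"
      using cnt[OF c v, of i] by simp
  qed simp
  also have "\<dots> = \<theta> * u (d c v)" using Pr_fwd rec d_bound[OF c v] by simp
  finally show "(\<Sum>w\<in>{w\<in>V. E v w}. u (d c w)) = \<theta> * u (d c v)" .
qed

lemma bwd: assumes g: "eig \<theta> g" and x: "x \<in> V" and i: "i \<le> D"
  shows "\<theta> * G g x i = (if i = 0 then 0 else bb (i-1) * G g x (i-1)) + aa i * G g x i
          + (if i < D then cc (Suc i) * G g x (Suc i) else 0)"
proof -
  have fS: "finite (Sp x i)" unfolding Sp_def using fin by simp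
  have "\<theta> * G g x i = (\<Sum>v\<in>Sp x i. \<theta> * g v)" unfolding G_def by (simp add: sum_distrib_left)
  also have "\<dots> = (\<Sum>v\<in>Sp x i. \<Sum>w\<in>{w\<in>V. E v w}. g w)"
    using g unfolding eig_def Sp_def by simp
  also have "\<dots> = (\<Sum>v\<in>Sp x i. \<Sum>w\<in>V. (if E v w then g w else 0))"
    by (rule sum.cong) (auto simp: sum.If_cases fin Int_def)
  also have "\<dots> = (\<Sum>w\<in>V. \<Sum>v\<in>Sp x i. (if E v w then g w else 0))"
    by (rule sum.swap)
  also have "\<dots> = (\<Sum>w\<in>V. Pr (d x w) i * g w)"
  proof (rule sum.cong)
    fix w assume w: "w \<in> V"
    have "(\<Sum>v\<in>Sp x i. (if E v w then g w else 0)) = g w * real (card {v \<in> Sp x i. E v w})"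
      using fS by (simp add: sum.If_cases Int_def)
    also have "{v \<in> Sp x i. E v w} = {v\<in>V. E w v \<and> d x v = i}"
      unfolding Sp_def using sym by blast
    finally show "(\<Sum>v\<in>Sp x i. (if E v w then g w else 0)) = Pr (d x w) i * g w"
      using cnt[OF x w, of i] by simp
  qed simp
  also have "\<dots> = (\<Sum>j\<le>D. Pr j i * (\<Sum>z\<in>{z\<in>V. d x z = j}. g z))"
    by (rule group_d[OF x]) simp
  also have "\<dots> = (\<Sum>j\<le>D. Pr j i * G g x j)" unfolding G_def Sp_def by simp
  finally show ?thesis using Pr_bwd[OF i, of "G g x"] by simp
qed

lemma exists_dist: "\<exists>x0\<in>V. \<forall>j\<le>D. \<exists>y\<in>V. d x0 y = j"
proof -
  obtain x0 y0 where xy: "x0 \<in> V" "y0 \<in> V" "d x0 y0 = D"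
    using drg unfolding distance_regular_def by blast
  have "\<forall>m. m \<le> D \<longrightarrow> (\<exists>y\<in>V. d x0 y = D - m)"
  proof
    fix m show "m \<le> D \<longrightarrow> (\<exists>y\<in>V. d x0 y = D - m)"
    proof (induction m)
      case 0 then show ?case using xy by auto
    next
      case (Suc m)
      show ?case
      proof
        assume m: "Suc m \<le> D"
        then obtain y where y: "y \<in> V" "d x0 y = D - m" using Suc by auto
        have "d x0 y = Suc (D - Suc m)" using y m by simp
        then obtain w where "E w y" "d x0 w = D - Suc m" using d_pred[OF xy(1) y(1)] by blast
        then show "\<exists>y\<in>V. d x0 y = D - Suc m" using inV by blast
      qed
    qed
  qed
  then show ?thesis using xy(1)
    by (metis diff_diff_cancel diff_le_self)
qed

lemma ci_pos: assumes "1 \<le> j" "j \<le> D" shows "ci j > 0"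
proof -
  obtain x0 y where x0: "x0 \<in> V" and y: "y \<in> V" "d x0 y = j" using exists_dist assms by blast
  obtain w where w: "E w y" "d x0 w = j - 1" using d_pred[OF x0 y(1), of "j-1"] y assms by auto
  have "w \<in> {z\<in>V. E y z \<and> d x0 z + 1 = d x0 y}" using w y assms inV sym by auto
  moreover have "finite {z\<in>V. E y z \<and> d x0 z + 1 = d x0 y}" using fin by simp
  ultimately have "card {z\<in>V. E y z \<and> d x0 z + 1 = d x0 y} > 0" by (metis card_gt_0_iff empty_iff)
  then show ?thesis using ci_def[OF x0 y(1)] y assms by simp
qed

lemma bi_pos: assumes "j < D" shows "bi j > 0"
proof -
  obtain x0 y where x0: "x0 \<in> V" and y: "y \<in> V" "d x0 y = Suc j" using exists_dist assms
    by (meson Suc_leI)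
  obtain w where w: "E w y" "d x0 w = j" using d_pred[OF x0 y(1)] y by auto
  have wV: "w \<in> V" using inV w by blast
  have "y \<in> {z\<in>V. E w z \<and> d x0 z = d x0 w + 1}" using w y by auto
  moreover have "finite {z\<in>V. E w z \<and> d x0 z = d x0 w + 1}" using fin by simp
  ultimately have "card {z\<in>V. E w z \<and> d x0 z = d x0 w + 1} > 0" by (metis card_gt_0_iff empty_iff)
  then show ?thesis using bi_def[OF x0 wV] w assms by simp
qed

end



locale drgc = drg V E D bi ci for V :: "'a set" and E and D and bi ci +
  fixes b :: int and \<alpha> \<beta> :: real
  assumes cp: "classical_parameters bi ci D b \<alpha> \<beta>" and b2: "b \<ge> 2"
begin

abbreviation "q \<equiv> qint b"

lemma q0: "q 0 = 0" and q1: "q 1 = 1" and q2: "q 2 = 1 + real_of_int b"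
  using b2 by (auto simp: qint_def field_simps power2_eq_square)

lemma q_mono: assumes "i < j" shows "q i < q j"
proof -
  have "real_of_int b ^ i < real_of_int b ^ j"
    using b2 assms by (intro power_strict_increasing) auto
  moreover have "real_of_int b - 1 > 0" using b2 by simp
  ultimately show ?thesis unfolding qint_def by (simp add: divide_strict_right_mono)
qed

lemma q_pos: "1 \<le> i \<Longrightarrow> q i > 0"
  using q_mono[of 0 i] q0 by simp

lemma bi_cl: "i < D \<Longrightarrow> real (bi i) = (q D - q i) * (\<beta> - \<alpha> * q i)"
  using cp unfolding classical_parameters_def by blast

lemma ci_cl: "1 \<le> i \<Longrightarrow> i \<le> D \<Longrightarrow> real (ci i) = q i * (1 + \<alpha> * q (i - 1))"
  using cp unfolding classical_parameters_def by blast

lemma k_cl: "k = q D * \<beta>"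
  using bi_cl[of 0] D2 q0 unfolding k_def by simp

lemma bb_cl: "i \<le> D \<Longrightarrow> bb i = (q D - q i) * (\<beta> - \<alpha> * q i)"
  using bi_cl unfolding bb_def by auto

lemma cc_cl: "1 \<le> i \<Longrightarrow> i \<le> D \<Longrightarrow> cc i = q i * (1 + \<alpha> * q (i - 1))"
  using ci_cl unfolding cc_def by auto

lemma cc1: "cc 1 = 1" using cc_cl[of 1] D2 q0 q1 by simp

lemma pos1: assumes "i < D" shows "\<beta> - \<alpha> * q i > 0"
proof -
  have "real (bi i) > 0" using bi_pos assms by simp
  moreover have "q D - q i > 0" using q_mono assms by simp
  ultimately show ?thesis using bi_cl[OF assms] by (simp add: zero_less_mult_iff)
qed

lemma pos2: assumes "1 \<le> i" "i \<le> D" shows "1 + \<alpha> * q (i - 1) > 0"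
proof -
  have "real (ci i) > 0" using ci_pos assms by simp
  moreover have "q i > 0" using q_pos assms by simp
  ultimately show ?thesis using ci_cl[OF assms] by (simp add: zero_less_mult_iff)
qed

lemma beta_pos: "\<beta> > 0" using pos1[of 0] D2 q0 by simp

lemma cc_pos: "1 \<le> i \<Longrightarrow> i \<le> D \<Longrightarrow> cc i > 0"
  using ci_pos unfolding cc_def by auto

lemma bb_nonneg: "bb i \<ge> 0" unfolding bb_def by auto

definition r :: "nat \<Rightarrow> real" where "r j = (1 + \<alpha> * q (j - 1)) / (\<beta> - \<alpha> * q (j - 1))"

fun uD :: "nat \<Rightarrow> real" where
  "uD 0 = 1" | "uD (Suc j) = - r (Suc j) * uD j"

lemma uD1: "uD 1 = - 1 / \<beta>" using q0 by (simp add: r_def)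
lemma uD2: "uD 2 = (1 + \<alpha>) / (\<beta> * (\<beta> - \<alpha>))"
  using q0 q1 by (simp add: numeral_2_eq_2 r_def)

lemma uD_rec: assumes "j \<le> D"
  shows "cc j * uD (j - 1) + aa j * uD j + bb j * uD (Suc j) = (- q D) * uD j"
proof (cases j)
  case 0
  have "aa 0 = 0" unfolding aa_def k_def bb_def cc_def using D2 by simp
  moreover have "bb 0 = q D * \<beta>" using k_cl D2 unfolding k_def bb_def by simp
  ultimately show ?thesis using 0 uD1 beta_pos by (simp add: cc_def)
next
  case (Suc j')
  define X where "X = \<beta> - \<alpha> * q j'"
  define Y where "Y = 1 + \<alpha> * q j'"
  have X: "X > 0" unfolding X_def using pos1 Suc assms by simp
  have rj: "r j = Y / X" unfolding r_def X_def Y_def Suc by simp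
  have ccj: "cc j = q j * Y" using cc_cl[of j] Suc assms unfolding Y_def by simp
  have bbj: "bb j = (q D - q j) * (\<beta> - \<alpha> * q j)" using bb_cl assms by simp
  have bbr: "bb j * r (Suc j) = (q D - q j) * (1 + \<alpha> * q j)"
  proof (cases "j < D")
    case True
    then have "\<beta> - \<alpha> * q j > 0" using pos1 by simp
    then show ?thesis unfolding bbj r_def by simp
  next
    case False
    then have "j = D" using assms by simp
    then show ?thesis unfolding bb_def by simp
  qed
  have aaj: "aa j = q D * \<beta> - (q D - q j) * (\<beta> - \<alpha> * q j) - q j * Y"
    unfolding aa_def k_cl bbj ccj by simp
  have key: "aa j - (q D - q j) * (1 + \<alpha> * q j) + q D = q j * X"
    unfolding aaj X_def Y_def by (simp add: algebra_simps)
  have u1: "uD j = - (Y / X) * uD j'" using Suc rj by simp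
  have u2: "uD (Suc j) = - r (Suc j) * uD j" by simp
  have "cc j * uD (j - 1) + aa j * uD j + bb j * uD (Suc j)
        = uD j' * (q j * Y - aa j * (Y / X) + (bb j * r (Suc j)) * (Y / X))"
    unfolding u2 u1 ccj using Suc by (simp add: algebra_simps)
  also have "\<dots> = uD j' * ((Y / X) * (q j * X - aa j + (q D - q j) * (1 + \<alpha> * q j)))"
    unfolding bbr using X by (simp add: field_simps)
  also have "\<dots> = uD j' * ((Y / X) * q D)" using key by (simp add: algebra_simps)
  also have "\<dots> = (- q D) * uD j" unfolding u1 by simp
  finally show ?thesis .
qed

lemma eig_qD: "c \<in> V \<Longrightarrow> eig (- q D) (\<lambda>v. uD (d c v))"
  by (rule fwd) (use uD_rec in auto)

lemma G0: assumes "x \<in> V" shows "G g x 0 = g x"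
proof -
  have "Sp x 0 = {x}" unfolding Sp_def using assms d_zero d_refl by auto
  then show ?thesis unfolding G_def by simp
qed

definition rhoD :: "nat \<Rightarrow> real" where "rhoD i = (q D - q (i - 1)) / q i"

lemma rhoD_pos: "1 \<le> i \<Longrightarrow> i \<le> D \<Longrightarrow> rhoD i > 0"
  unfolding rhoD_def using q_pos q_mono[of "i - 1" D] by simp

lemma Id1: assumes "1 \<le> i" "i < D"
  shows "cc (Suc i) * rhoD (Suc i) = aa i + q D - bb (i - 1) / rhoD i"
proof -
  have qi: "q i > 0" "q (Suc i) > 0" using q_pos assms by auto
  have qd: "q D - q (i - 1) > 0" using q_mono[of "i - 1" D] assms by simp
  have bbe: "bb (i - 1) = (q D - q (i - 1)) * (\<beta> - \<alpha> * q (i - 1))" using bb_cl[of "i - 1"] assms by simp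
  have e1: "bb (i - 1) / rhoD i = q i * (\<beta> - \<alpha> * q (i - 1))"
    unfolding bbe rhoD_def using qi qd by (simp add: field_simps)
  have e2: "cc (Suc i) * rhoD (Suc i) = (1 + \<alpha> * q i) * (q D - q i)"
    using cc_cl[of "Suc i"] assms qi unfolding rhoD_def by (simp add: field_simps)
  have e3: "aa i = q D * \<beta> - (q D - q i) * (\<beta> - \<alpha> * q i) - q i * (1 + \<alpha> * q (i - 1))"
    unfolding aa_def k_cl using bb_cl[of i] cc_cl[of i] assms by simp
  show ?thesis unfolding e1 e2 e3 by (simp add: algebra_simps)
qed

lemma Id2: "(aa D + q D) * rhoD D = bb (D - 1)" and Id2pos: "aa D + q D > 0"
proof -
  have qD: "q D > 0" using q_pos D2 by simp
  have e3: "aa D + q D = q D * (\<beta> - \<alpha> * q (D - 1))"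
    unfolding aa_def k_cl using cc_cl[of D] D2 by (simp add: bb_def algebra_simps)
  have bbe: "bb (D - 1) = (q D - q (D - 1)) * (\<beta> - \<alpha> * q (D - 1))" using bb_cl[of "D - 1"] by simp
  show "(aa D + q D) * rhoD D = bb (D - 1)"
    unfolding e3 rhoD_def bbe using qD by (simp add: field_simps)
  show "aa D + q D > 0" unfolding e3 using qD pos1[of "D - 1"] D2 by simp
qed

lemma eig_lb: assumes g: "eig \<theta> g" and x: "x \<in> V" and gx: "g x \<noteq> 0"
  shows "\<theta> \<ge> - q D"
proof (rule ccontr)
  assume "\<not> \<theta> \<ge> - q D"
  then have th: "\<theta> < - q D" by simp
  define GG where "GG = G g x"
  have claim: "1 \<le> i \<and> i \<le> D \<longrightarrow> GG (i - 1) \<noteq> 0 \<and> - GG i / GG (i - 1) > rhoD i" for i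
  proof (induction i)
    case 0 then show ?case by simp
  next
    case (Suc i)
    show ?case
    proof (cases "i = 0")
      case True
      have "\<theta> * GG 0 = aa 0 * GG 0 + cc 1 * GG 1"
        using bwd[OF g x, of 0] D2 unfolding GG_def by simp
      moreover have "aa 0 = 0" unfolding aa_def k_def bb_def cc_def using D2 by simp
      ultimately have "GG 1 = \<theta> * GG 0" using cc1 by simp
      moreover have "GG 0 \<noteq> 0" using G0[OF x] gx unfolding GG_def by simp
      moreover have "rhoD 1 = q D" unfolding rhoD_def using q0 q1 by simp
      ultimately show ?thesis using True th by simp
    next
      case False
      show ?thesis
      proof
        assume si: "1 \<le> Suc i \<and> Suc i \<le> D"
        then have i: "1 \<le> i" "i < D" using False by auto
        with Suc.IH have IH: "GG (i - 1) \<noteq> 0" "- GG i / GG (i - 1) > rhoD i" by auto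
        define \<rho> where "\<rho> = - GG i / GG (i - 1)"
        have rp: "\<rho> > rhoD i" "rhoD i > 0" using IH rhoD_pos i unfolding \<rho>_def by auto
        have Gi: "GG i = - \<rho> * GG (i - 1)" unfolding \<rho>_def using IH by simp
        have Gi0: "GG i \<noteq> 0" using Gi IH rp by simp
        have rec: "\<theta> * GG i = bb (i - 1) * GG (i - 1) + aa i * GG i + cc (Suc i) * GG (Suc i)"
          using bwd[OF g x, of i] i unfolding GG_def by simp
        have ccp: "cc (Suc i) > 0" using cc_pos i by simp
        have Gim: "GG (i - 1) = - GG i / \<rho>" using Gi rp by (simp add: field_simps)
        have "cc (Suc i) * GG (Suc i) = GG i * (\<theta> - aa i + bb (i - 1) / \<rho>)"
          using rec unfolding Gim by (simp add: algebra_simps)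
        then have eq: "- GG (Suc i) / GG i = (aa i - \<theta> - bb (i - 1) / \<rho>) / cc (Suc i)"
          using Gi0 ccp by (simp add: field_simps)
        have "bb (i - 1) / \<rho> \<le> bb (i - 1) / rhoD i"
          using rp bb_nonneg by (intro divide_left_mono) auto
        then have "aa i - \<theta> - bb (i - 1) / \<rho> > aa i + q D - bb (i - 1) / rhoD i" using th by simp
        then have "(aa i - \<theta> - bb (i - 1) / \<rho>) / cc (Suc i) > (aa i + q D - bb (i - 1) / rhoD i) / cc (Suc i)"
          using ccp by (simp add: divide_strict_right_mono)
        also have "(aa i + q D - bb (i - 1) / rhoD i) / cc (Suc i) = rhoD (Suc i)"
          using Id1[OF i] ccp by (simp add: field_simps)
        finally show "GG (Suc i - 1) \<noteq> 0 \<and> - GG (Suc i) / GG (Suc i - 1) > rhoD (Suc i)"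
          using eq Gi0 by simp
      qed
    qed
  qed
  have IH: "GG (D - 1) \<noteq> 0" "- GG D / GG (D - 1) > rhoD D" using claim[of D] D2 by auto
  define \<rho> where "\<rho> = - GG D / GG (D - 1)"
  have rp: "\<rho> > rhoD D" "rhoD D > 0" using IH rhoD_pos D2 unfolding \<rho>_def by auto
  have GD: "GG D = - \<rho> * GG (D - 1)" unfolding \<rho>_def using IH by simp
  have rec: "\<theta> * GG D = bb (D - 1) * GG (D - 1) + aa D * GG D"
    using bwd[OF g x, of D] D2 unfolding GG_def by simp
  then have "(- \<theta> * \<rho>) * GG (D - 1) = (bb (D - 1) - aa D * \<rho>) * GG (D - 1)"
    unfolding GD by (simp add: algebra_simps)
  then have "((aa D - \<theta>) * \<rho> - bb (D - 1)) * GG (D - 1) = 0" by (simp add: algebra_simps)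
  then have e: "(aa D - \<theta>) * \<rho> = bb (D - 1)" using IH(1) by simp
  have "(aa D - \<theta>) * \<rho> > (aa D + q D) * \<rho>" using th rp by (intro mult_strict_right_mono) auto
  moreover have "(aa D + q D) * \<rho> \<ge> (aa D + q D) * rhoD D"
    using rp Id2pos by (intro mult_left_mono) auto
  ultimately show False using e Id2 by simp
qed

lemma deg_diff_left: fixes p r :: "real poly"
  shows "degree p = n \<Longrightarrow> degree r < n \<Longrightarrow> degree (p - r) = n"
  by (metis degree_add_eq_left degree_minus diff_conv_add_uminus)

fun wp :: "nat \<Rightarrow> real poly" where
  "wp 0 = 1"
| "wp (Suc 0) = [:0, 1:]"
| "wp (Suc (Suc i)) = smult (1 / cc (Suc (Suc i))) ([:- aa (Suc i), 1:] * wp (Suc i) - smult (bb i) (wp i))"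

lemma G_wp: assumes g: "eig \<theta> g" and x: "x \<in> V"
  shows "i \<le> D \<Longrightarrow> G g x i = g x * poly (wp i) \<theta>"
proof (induction i rule: wp.induct)
  case 1 then show ?case using G0[OF x] by simp
next
  case 2
  have "\<theta> * G g x 0 = aa 0 * G g x 0 + cc 1 * G g x 1"
    using bwd[OF g x, of 0] D2 by simp
  moreover have "aa 0 = 0" unfolding aa_def k_def bb_def cc_def using D2 by simp
  ultimately show ?case using cc1 G0[OF x] by (simp add: algebra_simps)
next
  case (3 i)
  have rec: "\<theta> * G g x (Suc i) = bb i * G g x i + aa (Suc i) * G g x (Suc i) + cc (Suc (Suc i)) * G g x (Suc (Suc i))"
    using bwd[OF g x, of "Suc i"] 3 by simp
  have ccp: "cc (Suc (Suc i)) > 0" using cc_pos 3 by simp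
  have "G g x (Suc (Suc i)) = ((\<theta> - aa (Suc i)) * G g x (Suc i) - bb i * G g x i) / cc (Suc (Suc i))"
    using rec ccp by (simp add: field_simps)
  also have "\<dots> = g x * poly (wp (Suc (Suc i))) \<theta>"
    using 3 by (simp add: field_simps)
  finally show ?case .
qed

lemma deg_wp: "i \<le> D \<Longrightarrow> degree (wp i) = i"
proof (induction i rule: wp.induct)
  case (3 i)
  have "cc (Suc (Suc i)) > 0" using cc_pos[of "Suc (Suc i)"] 3 by simp
  then have ccp: "cc (Suc (Suc i)) \<noteq> 0" by simp
  have d1: "degree (wp (Suc i)) = Suc i" using 3 by simp
  then have nz: "wp (Suc i) \<noteq> 0" by auto
  have "degree ([:- aa (Suc i), 1:] * wp (Suc i)) = Suc (Suc i)"
    using nz d1 by (subst degree_mult_eq) auto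
  moreover have "degree (smult (bb i) (wp i)) < Suc (Suc i)"
    using 3 degree_smult_le[of "bb i" "wp i"] by simp
  ultimately have "degree ([:- aa (Suc i), 1:] * wp (Suc i) - smult (bb i) (wp i)) = Suc (Suc i)"
    by (rule deg_diff_left)
  then show ?case using ccp by simp
qed auto

definition Ep :: "real poly" where
  "Ep = [:- aa D, 1:] * wp D - smult (bb (D - 1)) (wp (D - 1))"

lemma Ep_nz: "Ep \<noteq> 0"
proof -
  have d1: "degree (wp D) = D" using deg_wp by simp
  then have nz: "wp D \<noteq> 0" using D2 by auto
  have "degree ([:- aa D, 1:] * wp D) = Suc D"
    using nz d1 by (subst degree_mult_eq) auto
  moreover have "degree (smult (bb (D - 1)) (wp (D - 1))) < Suc D"
    using deg_wp[of "D - 1"] degree_smult_le[of "bb (D - 1)" "wp (D - 1)"] by simp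
  ultimately have "degree Ep = Suc D"
    unfolding Ep_def by (rule deg_diff_left)
  then show ?thesis by auto
qed

lemma eig_root: assumes g: "eig \<theta> g" and x: "x \<in> V" and gx: "g x \<noteq> 0"
  shows "poly Ep \<theta> = 0"
proof -
  have rec: "\<theta> * G g x D = bb (D - 1) * G g x (D - 1) + aa D * G g x D"
    using bwd[OF g x, of D] D2 by simp
  then have "g x * (\<theta> * poly (wp D) \<theta> - bb (D - 1) * poly (wp (D - 1)) \<theta> - aa D * poly (wp D) \<theta>) = 0"
    using G_wp[OF g x, of D] G_wp[OF g x, of "D - 1"] by (simp add: algebra_simps)
  then have "\<theta> * poly (wp D) \<theta> - bb (D - 1) * poly (wp (D - 1)) \<theta> - aa D * poly (wp D) \<theta> = 0"
    using gx by simp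
  then show ?thesis unfolding Ep_def by (simp add: algebra_simps)
qed

lemma adj_eig: "adj_eigenvalue V E \<theta> \<longleftrightarrow> (\<exists>g. (\<exists>v\<in>V. g v \<noteq> 0) \<and> eig \<theta> g)"
  unfolding adj_eigenvalue_def eig_def by simp

lemma theta_min_val: "theta_min V E = - q D"
proof -
  let ?S = "{\<theta>. adj_eigenvalue V E \<theta>}"
  have "?S \<subseteq> {x. poly Ep x = 0}"
  proof
    fix y assume "y \<in> ?S"
    then obtain g v where "v \<in> V" "g v \<noteq> 0" "eig y g" unfolding mem_Collect_eq adj_eig by blast
    then show "y \<in> {x. poly Ep x = 0}" using eig_root by blast
  qed
  then have fS: "finite ?S" using poly_roots_finite[OF Ep_nz] finite_subset by blast
  obtain c where c: "c \<in> V" using drg unfolding distance_regular_def simple_graph_def by blast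
  have "eig (- q D) (\<lambda>v. uD (d c v))" by (rule eig_qD[OF c])
  moreover have "uD (d c c) \<noteq> 0" using d_refl by simp
  ultimately have "adj_eigenvalue V E (- q D)" unfolding adj_eig
    using c by (intro exI[where x="\<lambda>v. uD (d c v)"]) blast
  then have mem: "- q D \<in> ?S" by simp
  have lb: "- q D \<le> y" if "y \<in> ?S" for y
  proof -
    have "adj_eigenvalue V E y" using that by simp
    then obtain g v where "v \<in> V" "g v \<noteq> 0" "eig y g" unfolding adj_eig by blast
    then show ?thesis using eig_lb by blast
  qed
  show ?thesis unfolding theta_min_def by (rule Min_eqI[OF fS lb mem])
qed

lemma repro: assumes g: "eig \<theta> g" and c: "c \<in> V"
  shows "(\<Sum>z\<in>V. uD (d c z) * g z) = g c * (\<Sum>i\<le>D. uD i * poly (wp i) \<theta>)"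
proof -
  have "(\<Sum>z\<in>V. uD (d c z) * g z) = (\<Sum>i\<le>D. uD i * (\<Sum>z\<in>{z\<in>V. d c z = i}. g z))"
    by (rule group_d[OF c]) simp
  also have "\<dots> = (\<Sum>i\<le>D. uD i * (g c * poly (wp i) \<theta>))"
    by (rule sum.cong) (use G_wp[OF g c] in \<open>auto simp: G_def Sp_def\<close>)
  also have "\<dots> = g c * (\<Sum>i\<le>D. uD i * poly (wp i) \<theta>)"
    by (simp add: sum_distrib_left algebra_simps)
  finally show ?thesis .
qed

lemma reg: assumes CV: "C \<subseteq> V" and cl: "\<And>c c'. c \<in> C \<Longrightarrow> c' \<in> C \<Longrightarrow> c \<noteq> c' \<Longrightarrow> E c c'"
  and cardC: "real (card C) = \<beta> + 1" and z: "z \<in> V" "z \<notin> C" and c0: "c0 \<in> C" "E z c0"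
  shows "real (card {c\<in>C. E c z}) = 1 + \<alpha>"
proof -
  define \<theta> where "\<theta> = - q D"
  have fC: "finite C" using CV fin finite_subset by blast
  define h where "h = (\<lambda>v. \<Sum>c\<in>C. uD (d c v))"
  have eh: "eig \<theta> h" unfolding eig_def
  proof
    fix v assume v: "v \<in> V"
    have "(\<Sum>w\<in>{w\<in>V. E v w}. h w) = (\<Sum>c\<in>C. \<Sum>w\<in>{w\<in>V. E v w}. uD (d c w))"
      unfolding h_def by (rule sum.swap)
    also have "\<dots> = (\<Sum>c\<in>C. \<theta> * uD (d c v))"
      by (rule sum.cong) (use eig_qD CV v in \<open>auto simp: eig_def \<theta>_def\<close>)
    also have "\<dots> = \<theta> * h v" unfolding h_def by (simp add: sum_distrib_left)
    finally show "(\<Sum>w\<in>{w\<in>V. E v w}. h w) = \<theta> * h v" .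
  qed
  have hc: "h c = 0" if c: "c \<in> C" for c
  proof -
    have "h c = uD (d c c) + (\<Sum>c'\<in>C - {c}. uD (d c' c))"
      unfolding h_def using fC c by (simp add: sum.remove)
    also have "(\<Sum>c'\<in>C - {c}. uD (d c' c)) = (\<Sum>c'\<in>C - {c}. - 1 / \<beta>)"
      by (rule sum.cong) (use cl c d_adj uD1 in auto)
    also have "\<dots> = (real (card C) - 1) * (- 1 / \<beta>)"
    proof -
      have "card C \<ge> 1" using fC c by (metis One_nat_def Suc_leI card_gt_0_iff empty_iff)
      then show ?thesis using fC c by (simp add: card_Diff_subset of_nat_diff)
    qed
    finally show ?thesis using cardC beta_pos d_refl by simp
  qed
  define P where "P = (\<Sum>i\<le>D. uD i * poly (wp i) \<theta>)"
  have "(\<Sum>v\<in>V. h v * h v) = (\<Sum>v\<in>V. \<Sum>c\<in>C. uD (d c v) * h v)"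
    unfolding h_def by (simp add: sum_distrib_right)
  also have "\<dots> = (\<Sum>c\<in>C. \<Sum>v\<in>V. uD (d c v) * h v)" by (rule sum.swap)
  also have "\<dots> = (\<Sum>c\<in>C. h c * P)"
    by (rule sum.cong) (use repro[OF eh] CV in \<open>auto simp: P_def\<close>)
  also have "\<dots> = 0" using hc by simp
  finally have "(\<Sum>v\<in>V. h v * h v) = 0" .
  then have "\<forall>v\<in>V. h v * h v = 0" using fin by (subst sum_nonneg_eq_0_iff[symmetric]) auto
  then have hz: "h z = 0" using z by simp
  define A where "A = {c\<in>C. E c z}"
  have AC: "A \<subseteq> C" unfolding A_def by auto
  have fA: "finite A" using AC fC finite_subset by blast
  have "h z = (\<Sum>c\<in>C. (if E c z then uD 1 else uD 2))"
    unfolding h_def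
  proof (rule sum.cong)
    fix c assume c: "c \<in> C"
    show "uD (d c z) = (if E c z then uD 1 else uD 2)"
    proof (cases "E c z")
      case True then show ?thesis using d_adj by simp
    next
      case False
      have cV: "c \<in> V" using c CV by auto
      have "c \<noteq> c0" using False c0 sym by blast
      then have "E c c0" using cl c c0 by blast
      have "d c z \<le> d c c0 + 1" using d_step[OF cV sym[OF c0(2)]] .
      then have "d c z \<le> 2" using d_adj[OF \<open>E c c0\<close>] by simp
      moreover have "d c z \<noteq> 0" using d_zero[OF cV z(1)] z(2) c by blast
      moreover have "d c z \<noteq> 1" using d_one[OF cV z(1)] False by blast
      ultimately have "d c z = 2" by simp
      then show ?thesis using False by simp
    qed
  qed simp
  also have "\<dots> = uD 1 * real (card A) + uD 2 * (real (card C) - real (card A))"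
  proof -
    have e: "{x\<in>C. \<not> E x z} = C - A" unfolding A_def by auto
    have "card A \<le> card C" using card_mono[OF fC AC] .
    then have cdiff: "real (card {x\<in>C. \<not> E x z}) = real (card C) - real (card A)"
      unfolding e using card_Diff_subset[OF fA AC] by (simp add: of_nat_diff)
    show ?thesis using fC cdiff by (simp add: sum.If_cases A_def Int_def)
  qed
  finally have "uD 1 * real (card A) + uD 2 * (real (card C) - real (card A)) = 0" using hz by simp
  then have "- real (card A) / \<beta> + (1 + \<alpha>) / (\<beta> * (\<beta> - \<alpha>)) * (\<beta> + 1 - real (card A)) = 0"
    using uD1 uD2 cardC by simp
  moreover have "\<beta> - \<alpha> > 0" using pos1[of 1] q1 D2 by simp
  ultimately have "(\<beta> + 1) * (real (card A) - (1 + \<alpha>)) = 0"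
  proof -
    assume E0: "- real (card A) / \<beta> + (1 + \<alpha>) / (\<beta> * (\<beta> - \<alpha>)) * (\<beta> + 1 - real (card A)) = 0"
      and ba: "\<beta> - \<alpha> > 0"
    have "\<beta> * (\<beta> - \<alpha>) * (- real (card A) / \<beta> + (1 + \<alpha>) / (\<beta> * (\<beta> - \<alpha>)) * (\<beta> + 1 - real (card A)))
      = - (\<beta> + 1) * (real (card A) - (1 + \<alpha>))"
      using ba beta_pos by (simp add: field_simps)
    then have "- (\<beta> + 1) * (real (card A) - (1 + \<alpha>)) = 0" unfolding E0 by simp
    then show ?thesis by linarith
  qed
  then show ?thesis using beta_pos unfolding A_def by simp
qed

lemma nb_out: assumes p: "p \<in> V" and C: "C \<subseteq> V" "p \<in> C" "real (card C) = \<beta> + 1"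
  shows "\<exists>v. E p v \<and> v \<notin> C"
proof (rule ccontr)
  assume "\<not> ?thesis"
  then have sub: "Nb p \<subseteq> C - {p}" unfolding Nb_def using irr by auto
  have fC: "finite C" using C fin finite_subset by blast
  have "card (Nb p) \<le> card (C - {p})" using card_mono[OF _ sub] fC by simp
  moreover have "card C \<ge> 1" using fC C(2) by (metis One_nat_def Suc_leI card_gt_0_iff empty_iff)
  ultimately have "real (card (Nb p)) \<le> real (card C) - 1" using C fC by (simp add: card_Diff_subset of_nat_diff)
  then have "q D * \<beta> \<le> \<beta>" using deg[OF p] C k_cl unfolding k_def by simp
  moreover have "q D > 1" using q_mono[of 1 D] q1 D2 by simp
  ultimately show False using beta_pos by (simp add: mult_le_cancel_right1)
qed

end



theorem lemma11:
  fixes V :: "'a set" and E :: "'a \<Rightarrow> 'a \<Rightarrow> bool"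
    and D :: nat and bi ci :: "nat \<Rightarrow> nat"
    and b :: int and \<alpha> \<beta> :: real and \<gamma> :: nat and x y :: 'a
  assumes "distance_regular V E D bi ci"
    and "classical_parameters bi ci D b \<alpha> \<beta>"
    and "b \<ge> 2" and "D \<ge> 3"
    and "\<gamma> \<ge> 3" and "PLS V E \<gamma>"
    and "x \<noteq> y"
    and "delsarte_vertex V E (bi 0) \<gamma> x" and "delsarte_vertex V E (bi 0) \<gamma> y"
    and "gdist E x y \<le> 2"
  shows "\<alpha> \<le> real_of_int b \<and> (\<exists>n::nat. \<alpha> = real n)"
proof -
  note A = assms
  interpret drgc V E D bi ci b \<alpha> \<beta>
    using A(1-4) by unfold_locales auto
  define L where "L = lines V E \<gamma>"
  have pls: "partial_linear_space V L" and pg: "is_point_graph V E L"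
    using A(6) unfolding PLS_def L_def by auto
  have xV: "x \<in> V" and yV: "y \<in> V" using A(8,9) unfolding delsarte_vertex_def by auto
  have line_ex: "\<exists>C\<in>L. u \<in> C \<and> v \<in> C" if "E u v" for u v
    using pg inV[OF that] that irr unfolding is_point_graph_def by metis
  have line_sub: "C \<subseteq> V" if "C \<in> L" for C using pls that unfolding partial_linear_space_def by auto
  have line_uniq: "C1 = C2" if "C1 \<in> L" "C2 \<in> L" "u \<in> C1" "v \<in> C1" "u \<in> C2" "v \<in> C2" "u \<noteq> v" for C1 C2 u v
    using pls that line_sub unfolding partial_linear_space_def by blast
  have line_cl: "E c c'" if "C \<in> L" "c \<in> C" "c' \<in> C" "c \<noteq> c'" for C c c'
    using that unfolding L_def lines_def maximal_clique_def is_clique_def by auto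
  have tm: "theta_min V E = - q D" by (rule theta_min_val)
  have qD: "q D > 0" using q_pos D2 by simp
  have del_card: "real (card C) = \<beta> + 1" if "delsarte_vertex V E (bi 0) \<gamma> p" "C \<in> L" "p \<in> C" for p C
  proof -
    have "delsarte_clique V E (bi 0) C" using that unfolding delsarte_vertex_def L_def by blast
    then have "real (card C) = 1 + real (bi 0) / q D" unfolding delsarte_clique_def tm by simp
    also have "real (bi 0) = q D * \<beta>" using k_cl unfolding k_def .
    finally show ?thesis using qD by simp
  qed
  have regL: "real (card {c\<in>C. E c z}) = 1 + \<alpha>"
    if "delsarte_vertex V E (bi 0) \<gamma> p" "C \<in> L" "p \<in> C" "z \<in> V" "z \<notin> C" "c0 \<in> C" "E z c0" for p C z c0
    by (rule reg[OF line_sub[OF that(2)] line_cl[OF that(2)] del_card[OF that(1-3)] that(4-7)])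
  have nat_part: "\<exists>n::nat. \<alpha> = real n"
  proof -
    have "0 < D" using D2 by simp
    then have "card (Nb x) > 0" using deg[OF xV] bi_pos by simp
    then obtain z0 where "z0 \<in> Nb x" by (metis card_gt_0_iff ex_in_conv)
    then have "E x z0" unfolding Nb_def by simp
    then obtain C0 where C0: "C0 \<in> L" "x \<in> C0" "z0 \<in> C0" using line_ex by blast
    obtain z where z: "E x z" "z \<notin> C0"
      using nb_out[OF xV line_sub[OF C0(1)] C0(2) del_card[OF A(8) C0(1,2)]] by blast
    have zV: "z \<in> V" using inV z by blast
    have cz: "real (card {c\<in>C0. E c z}) = 1 + \<alpha>"
      using regL[OF A(8) C0(1,2) zV z(2) C0(2) sym[OF z(1)]] .
    have "{c\<in>C0. E c z} \<subseteq> V" using line_sub[OF C0(1)] by auto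
    then have fin0: "finite {c\<in>C0. E c z}" using finite_subset fin by blast
    have "x \<in> {c\<in>C0. E c z}" using C0 z by simp
    then have "card {c\<in>C0. E c z} \<ge> 1" using fin0 by (metis One_nat_def Suc_leI card_gt_0_iff empty_iff)
    then have "\<alpha> = real (card {c\<in>C0. E c z} - 1)" using cz by (simp add: of_nat_diff)
    then show ?thesis by blast
  qed
  have "\<exists>M y0 z. M \<in> L \<and> y \<in> M \<and> x \<notin> M \<and> y0 \<in> M \<and> E x y0 \<and> z \<in> M \<and> z \<noteq> x \<and> \<not> E x z"
  proof -
    have "d x y \<noteq> 0" using d_zero[OF xV yV] A(7) by blast
    then consider "d x y = 1" | "d x y = 2" using A(10) by linarith
    then show ?thesis
    proof cases
      case 1
      then have Exy: "E x y" using d_one[OF xV yV] by blast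
      obtain L0 where L0: "L0 \<in> L" "x \<in> L0" "y \<in> L0" using line_ex[OF Exy] by blast
      obtain v where v: "E y v" "v \<notin> L0"
        using nb_out[OF yV line_sub[OF L0(1)] L0(3) del_card[OF A(9) L0(1,3)]] by blast
      obtain M where M: "M \<in> L" "y \<in> M" "v \<in> M" using line_ex[OF v(1)] by blast
      have xM: "x \<notin> M"
      proof
        assume "x \<in> M"
        then have "L0 = M" using line_uniq[OF L0(1) M(1) L0(2,3)] M(2) A(7) by blast
        then show False using v M by simp
      qed
      have cM: "real (card {c\<in>M. E c x}) = 1 + \<alpha>"
        using regL[OF A(9) M(1,2) xV xM M(2) Exy] .
      have "\<beta> - \<alpha> > 0" using pos1[of 1] q1 D2 by simp
      moreover have "real (card M) = \<beta> + 1" using del_card[OF A(9) M(1,2)] .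
      ultimately have "{c\<in>M. E c x} \<noteq> M" using cM by auto
      then obtain z where z: "z \<in> M" "\<not> E z x" by blast
      have "z \<noteq> x" using z xM by blast
      moreover have "\<not> E x z" using z sym by blast
      ultimately show ?thesis using M xM Exy z by blast
    next
      case 2
      then obtain w where w: "E w y" "d x w = 1" using d_pred[OF xV yV, of 1] by auto
      have Exw: "E x w" using d_one[OF xV _ w(2)] inV w by blast
      obtain M where M: "M \<in> L" "w \<in> M" "y \<in> M" using line_ex[OF w(1)] by blast
      have nxy: "\<not> E x y" using d_adj 2 by fastforce
      have xM: "x \<notin> M" using line_cl[OF M(1) _ M(3) A(7)] nxy by blast
      show ?thesis using M xM Exw A(7) nxy by blast
    qed
  qed
  then obtain M y0 z where M: "M \<in> L" "y \<in> M" "x \<notin> M" "y0 \<in> M" "E x y0" "z \<in> M" "z \<noteq> x" "\<not> E x z"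
    by blast
  have zV: "z \<in> V" using line_sub[OF M(1)] M(6) by blast
  define W where "W = {c\<in>M. E c x}"
  have cW: "real (card W) = 1 + \<alpha>" unfolding W_def using regL[OF A(9) M(1,2) xV M(3,4,5)] .
  have fM: "finite M" using line_sub[OF M(1)] fin finite_subset by blast
  have fW: "finite W" using fM unfolding W_def by simp
  have y0W: "y0 \<in> W" unfolding W_def using M sym by blast
  have "\<forall>w\<in>W. \<exists>C. C \<in> L \<and> x \<in> C \<and> w \<in> C"
    using line_ex sym unfolding W_def by blast
  then obtain Lf where Lf: "\<And>w. w \<in> W \<Longrightarrow> Lf w \<in> L \<and> x \<in> Lf w \<and> w \<in> Lf w"
    by metis
  define T where "T w = {c\<in>Lf w. E c z}" for w
  have zLf: "z \<notin> Lf w" if "w \<in> W" for w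
    using line_cl[of "Lf w" x z] Lf[OF that] M(7,8) by blast
  have Ezw: "E z w" if "w \<in> W" for w
  proof -
    have "w \<in> M" "E w x" using that unfolding W_def by auto
    moreover have "w \<noteq> z" using M(8) sym calculation(2) by blast
    ultimately show ?thesis using line_cl[OF M(1) M(6)] by blast
  qed
  have cT: "real (card (T w)) = 1 + \<alpha>" if "w \<in> W" for w
    unfolding T_def using regL[OF A(8) _ _ zV zLf[OF that] _ Ezw[OF that]] Lf[OF that] by blast
  have fT: "finite (T w)" if "w \<in> W" for w
    using line_sub Lf[OF that] fin finite_subset unfolding T_def by (metis (no_types, lifting) mem_Collect_eq subsetI)
  have dxz: "d x z = 2"
  proof -
    have "d x z \<le> d x y0 + 1" using d_step[OF xV sym[OF Ezw[OF y0W]]] .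
    moreover have "d x y0 = 1" using d_adj M(5) by simp
    moreover have "d x z \<noteq> 0" using d_zero[OF xV zV] M(7) by blast
    moreover have "d x z \<noteq> 1" using d_one[OF xV zV] M(8) by blast
    ultimately show ?thesis by simp
  qed
  define CN where "CN = {v\<in>V. E z v \<and> d x v + 1 = d x z}"
  have cCN: "real (card CN) = (1 + real_of_int b) * (1 + \<alpha>)"
  proof -
    have "card CN = ci 2" unfolding CN_def using ci_def[OF xV zV] dxz by simp
    then show ?thesis using ci_cl[of 2] D2 q1 q2 by simp
  qed
  have fCN: "finite CN" unfolding CN_def using fin by simp
  have Tsub: "(\<Union>w\<in>W. T w) \<subseteq> CN"
  proof
    fix c assume "c \<in> (\<Union>w\<in>W. T w)"
    then obtain w where w: "w \<in> W" "c \<in> Lf w" "E c z" unfolding T_def by blast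
    have "c \<noteq> x" using w(3) M(8) by blast
    then have "E x c" using line_cl[of "Lf w" x c] Lf[OF w(1)] w(2) by blast
    then show "c \<in> CN" unfolding CN_def using dxz d_adj inV sym w(3) by fastforce
  qed
  have disj: "\<forall>w1\<in>W. \<forall>w2\<in>W. w1 \<noteq> w2 \<longrightarrow> T w1 \<inter> T w2 = {}"
  proof (intro ballI impI)
    fix w1 w2 assume w: "w1 \<in> W" "w2 \<in> W" "w1 \<noteq> w2"
    show "T w1 \<inter> T w2 = {}"
    proof (rule ccontr)
      assume "T w1 \<inter> T w2 \<noteq> {}"
      then obtain c where c: "c \<in> Lf w1" "c \<in> Lf w2" "E c z" unfolding T_def by blast
      have "c \<noteq> x" using c(3) M(8) by blast
      have L1: "Lf w1 \<in> L" "x \<in> Lf w1" "w1 \<in> Lf w1" using Lf[OF w(1)] by auto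
      have L2: "Lf w2 \<in> L" "x \<in> Lf w2" "w2 \<in> Lf w2" using Lf[OF w(2)] by auto
      have "Lf w1 = Lf w2" using line_uniq[OF L1(1) L2(1) L1(2) c(1) L2(2) c(2)] \<open>c \<noteq> x\<close> by blast
      then have w2L: "w2 \<in> Lf w1" using L2 by simp
      have "w1 \<in> M" "w2 \<in> M" using w unfolding W_def by auto
      then have "Lf w1 = M" using line_uniq[OF L1(1) M(1) L1(3) w2L _ _ w(3)] by blast
      then show False using Lf[OF w(1)] M(3) by simp
    qed
  qed
  have "card (\<Union>w\<in>W. T w) = (\<Sum>w\<in>W. card (T w))"
    by (rule card_UN_disjoint[OF fW]) (use fT disj in auto)
  then have "real (card (\<Union>w\<in>W. T w)) = (\<Sum>w\<in>W. (1 + \<alpha>))"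
    using cT by simp
  also have "\<dots> = (1 + \<alpha>) * (1 + \<alpha>)" using cW by (simp add: mult.commute)
  finally have "(1 + \<alpha>) * (1 + \<alpha>) \<le> (1 + real_of_int b) * (1 + \<alpha>)"
    using card_mono[OF fCN Tsub] cCN by (metis of_nat_le_iff)
  moreover have "1 + \<alpha> > 0"
  proof -
    have "card W > 0" using fW y0W card_gt_0_iff by blast
    then show ?thesis using cW by simp
  qed
  ultimately have "\<alpha> \<le> real_of_int b" by (simp add: mult_le_cancel_right)
  then show ?thesis using nat_part by blast
qed

end
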